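(* Let $X$ be an absolutely continuous random variable with PDF $f$, CDF $F$ and finite CIGF. Then, for $(\alpha,\beta)\in D_X$ with $\alpha>-1$ and $\beta>-1$, $$G_X(\alpha,\beta)=B(\alpha+1,\beta+1)\,\mathbb{E}[r(Y)],$$ where $Y\sim\mathrm{Beta}(\alpha+1,\beta+1)$ is independent of $X$, $r(Y)=[f(F^{-1}(Y))]^{-1}$, and $B(x,y)=\int_0^1t^{x-1}(1-t)^{y-1}dt$ is the Euler Beta function.
   Context: For a random variable $X$ with CDF $F$ and survival function $\overline F=1-F$, with $l=\inf\{x:F(x)>0\}$, $r=\sup\{x:\overline F(x)>0\}$, the CIGF is $G_X(\alpha,\beta)=\int_l^r [F(x)]^\alpha[\overline F(x)]^\beta\,dx$ on $D_X=\{(\alpha,\beta)\in\mathbb{R}^2: G_X(\alpha,\beta)<\infty\}$. The quantile function is $F^{-1}(u)=\sup\{x: F(x)\le u\}$, $u\in[0,1]$.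
   Formalization: The PDF f is also strictly positive at every x with l < x < r, so the support of X is the whole interval between l and r, with no gaps where f vanishes. Apart from conventions, each condition added here is assumed in the paper as well or is needed for the statement above to hold. *)

theory Defs
  imports "HOL-Probability.Probability"
begin

definition supp_left :: "(real \<Rightarrow> real) \<Rightarrow> ereal" where
  "supp_left F = Inf (ereal ` {x. F x > 0})"

definition supp_right :: "(real \<Rightarrow> real) \<Rightarrow> ereal" where
  "supp_right F = Sup (ereal ` {x. 1 - F x > 0})"

definition supp_interval :: "(real \<Rightarrow> real) \<Rightarrow> real set" where
  "supp_interval F = {x. supp_left F < ereal x \<and> ereal x < supp_right F}"

definition cigf :: "(real \<Rightarrow> real) \<Rightarrow> real \<Rightarrow> real \<Rightarrow> real" where
  "cigf F a b = (LINT x : supp_interval F | lborel. F x powr a * (1 - F x) powr b)"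

text \<open>Its domain D_X: the pairs for which the (nonnegative) integral is finite.\<close>
definition cigf_domain :: "(real \<Rightarrow> real) \<Rightarrow> (real \<times> real) set" where
  "cigf_domain F = {(a, b). set_integrable lborel (supp_interval F)
                              (\<lambda>x. F x powr a * (1 - F x) powr b)}"

definition quantile :: "(real \<Rightarrow> real) \<Rightarrow> real \<Rightarrow> real" where
  "quantile F u = Sup {x. F x \<le> u}"

definition beta_density :: "real \<Rightarrow> real \<Rightarrow> real \<Rightarrow> real" where
  "beta_density a b y =
     (if 0 < y \<and> y < 1 then y powr (a - 1) * (1 - y) powr (b - 1) / Beta a b else 0)"

end

theory Submission
  imports Defs
begin

theorem proposition8:
  fixes M :: "'a measure" and X Y :: "'a \<Rightarrow> real" and f :: "real \<Rightarrow> real"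
    and \<alpha> \<beta> :: real
  defines "F \<equiv> cdf (distr M borel X)"
  assumes "prob_space M"
    and f_nonneg: "\<And>x. f x \<ge> 0"
    and f_meas: "f \<in> borel_measurable borel"
    and X_distr: "distributed M lborel X (\<lambda>x. ennreal (f x))"
    and f_pos: "\<And>x. x \<in> supp_interval F \<Longrightarrow> f x > 0"
    and dom: "(\<alpha>, \<beta>) \<in> cigf_domain F"
    and "\<alpha> > -1" and "\<beta> > -1"
    and Y_distr: "distributed M lborel Y (\<lambda>y. ennreal (beta_density (\<alpha> + 1) (\<beta> + 1) y))"
    and indep: "prob_space.indep_var M borel X borel Y"
  shows "cigf F \<alpha> \<beta> =
           Beta (\<alpha> + 1) (\<beta> + 1) *
           prob_space.expectation M (\<lambda>\<omega>. 1 / f (quantile F (Y \<omega>)))"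
proof -
  interpret P: prob_space M by fact
  define D where "D = distr M borel X"
  have Xm[measurable]: "X \<in> borel_measurable M"
    using X_distr by (auto simp: distributed_def)
  have Ym[measurable]: "Y \<in> borel_measurable M"
    using Y_distr by (auto simp: distributed_def)
  have DD: "D = density lborel (\<lambda>x. ennreal (f x))"
  proof -
    have "distr M borel X = distr M lborel X" by (rule distr_cong) auto
    thus ?thesis using X_distr by (simp add: D_def distributed_def)
  qed
  interpret RD: real_distribution D unfolding D_def by (rule P.real_distribution_distr) simp
  have FD: "F x = measure D {..x}" for x by (simp add: F_def D_def[symmetric] cdf_def)
  have Fmono: "F x \<le> F y" if "x \<le> y" for x y
    unfolding F_def D_def[symmetric] using that by (rule RD.cdf_nondecreasing)
  have F0: "F x \<ge> 0" for x unfolding F_def D_def[symmetric] by (rule RD.cdf_nonneg)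
  have F1: "F x \<le> 1" for x unfolding F_def D_def[symmetric] by (rule RD.cdf_bounded_prob)
  have Fbot: "(F \<longlongrightarrow> 0) at_bot" unfolding F_def D_def[symmetric] by (rule RD.cdf_lim_at_bot)
  have Ftop: "(F \<longlongrightarrow> 1) at_top" unfolding F_def D_def[symmetric] by (rule RD.cdf_lim_at_top_prob)
  have Fcont: "isCont F x" for x
  proof -
    have "emeasure D {x} = (\<integral>\<^sup>+ y. ennreal (f y) * indicator {x} y \<partial>lborel)"
      unfolding DD using f_meas by (subst emeasure_density) auto
    also have "\<dots> = 0"
      by (rule nn_integral_null_set) (auto intro: countable_imp_null_set_lborel) 
    finally show ?thesis unfolding F_def D_def[symmetric] RD.isCont_cdf by (simp add: measure_def)
  qed

  define S where "S = supp_interval F"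
  have Sa: "0 < F x \<and> F x < 1" if "x \<in> S" for x
  proof -
    have "supp_left F < ereal x" "ereal x < supp_right F"
      using that by (auto simp: S_def supp_interval_def)
    then obtain y z where "F y > 0" "y < x" "1 - F z > 0" "x < z"
      unfolding supp_left_def supp_right_def by (auto simp: Inf_less_iff less_Sup_iff)
    thus ?thesis using Fmono[of y x] Fmono[of x z] by auto
  qed
  have Sb: "x \<in> S" if Fx: "0 < F x" "F x < 1" for x
  proof -
    have c1: "F \<midarrow>x\<rightarrow> F x" using Fcont[of x] by (simp add: isCont_def)
    obtain d where d: "d > 0" "\<forall>y. y \<noteq> x \<and> \<bar>x - y\<bar> < d \<longrightarrow> 0 < F y"
      using LIM_fun_gt_zero[OF c1 Fx(1)] by auto
    have c2: "(\<lambda>y. 1 - F y) \<midarrow>x\<rightarrow> 1 - F x" using c1 by (intro tendsto_intros)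
    obtain e where e: "e > 0" "\<forall>y. y \<noteq> x \<and> \<bar>x - y\<bar> < e \<longrightarrow> 0 < 1 - F y"
      using LIM_fun_gt_zero[OF c2] Fx(2) by auto
    have "F (x - d/2) > 0" using d by auto
    hence "supp_left F \<le> ereal (x - d/2)" unfolding supp_left_def by (intro Inf_lower) auto
    also have "\<dots> < ereal x" using d by simp
    finally have 1: "supp_left F < ereal x" .
    have "1 - F (x + e/2) > 0" using e by auto
    hence "ereal (x + e/2) \<le> supp_right F" unfolding supp_right_def by (intro Sup_upper) auto
    moreover have "ereal x < ereal (x + e/2)" using e by simp
    ultimately have 2: "ereal x < supp_right F" by order
    show ?thesis using 1 2 by (simp add: S_def supp_interval_def)
  qed
  have Fdiff: "F z - F x = measure D {x<..z}" if "x \<le> z" for x z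
    using that unfolding FD proof -
    have "{..z} - {..x} = {x<..z}" by auto
    thus "measure D {..z} - measure D {..x} = measure D {x<..z}"
      using that by (simp add: RD.finite_measure_Diff[symmetric])
  qed
  have Sc: "F x < F z" if "x \<in> S" "x < z" for x z
  proof -
    have "supp_left F < ereal x" "ereal x < supp_right F"
      using that by (auto simp: S_def supp_interval_def)
    then obtain y where y: "1 - F y > 0" "x < y"
      unfolding supp_right_def by (auto simp: less_Sup_iff)
    define z' where "z' = min z ((x + y) / 2)"
    have xz': "x < z'" "z' \<le> z" "z' < y" using y that by (auto simp: z'_def min_def)
    have sub: "{x<..z'} \<subseteq> S"
    proof
      fix w assume w: "w \<in> {x<..z'}"
      have "supp_left F < ereal w" using \<open>supp_left F < ereal x\<close> w by (auto intro: order.strict_trans2)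
      moreover have "ereal w < supp_right F"
      proof -
        have "ereal y \<le> supp_right F" unfolding supp_right_def using y by (intro Sup_upper) auto
        moreover have "ereal w < ereal y" using w xz' by simp
        ultimately show ?thesis by order
      qed
      ultimately show "w \<in> S" by (simp add: S_def supp_interval_def)
    qed
    have "emeasure D {x<..z'} = (\<integral>\<^sup>+ w. ennreal (f w) * indicator {x<..z'} w \<partial>lborel)"
      unfolding DD using f_meas by (subst emeasure_density) auto
    also have "\<dots> \<noteq> 0"
    proof
      assume "(\<integral>\<^sup>+ w. ennreal (f w) * indicator {x<..z'} w \<partial>lborel) = 0"
      hence "AE w in lborel. ennreal (f w) * indicator {x<..z'} w = 0"
        using f_meas by (subst (asm) nn_integral_0_iff_AE) auto
      hence "AE w in lborel. w \<notin> {x<..z'}"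
        proof (eventually_elim)
          case (elim w)
          show ?case
          proof
            assume "w \<in> {x<..z'}"
            hence "f w > 0" using sub f_pos S_def by auto
            thus False using elim \<open>w \<in> {x<..z'}\<close> by auto
          qed
        qed
      hence "{x<..z'} \<in> null_sets lborel" by (subst AE_iff_null_sets) auto
      thus False using xz' by (auto simp: null_sets_def)
    qed
    finally have "measure D {x<..z'} > 0"
      by (simp add: RD.emeasure_eq_measure zero_less_measure_iff)
    hence "F x < F z'" using Fdiff[of x z'] xz' by simp
    thus ?thesis using Fmono[OF xz'(2)] by simp
  qed
  have Sd: "quantile F (F x) = x" if "x \<in> S" for x
    unfolding quantile_def
    by (rule cSup_eq_maximum) (use Sc[OF that] in \<open>auto simp: not_le[symmetric]\<close>)

  have Fcont_on: "continuous_on UNIV F" using Fcont by (simp add: continuous_at_imp_continuous_on)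
  have Se: "F (quantile F u) = u \<and> {x. F x \<le> u} = {..quantile F u}" if u: "0 < u" "u < 1" for u
  proof -
    define A where "A = {x. F x \<le> u}"
    have "eventually (\<lambda>x. F x < u) at_bot" using Fbot u by (auto intro: order_tendstoD)
    then obtain b where b: "\<And>x. x \<le> b \<Longrightarrow> F x < u" by (auto simp: eventually_at_bot_linorder)
    have "eventually (\<lambda>x. F x > u) at_top" using Ftop u by (auto intro: order_tendstoD)
    then obtain c where c: "\<And>x. x \<ge> c \<Longrightarrow> F x > u" by (auto simp: eventually_at_top_linorder)
    have ne: "A \<noteq> {}" using b[of b] by (auto simp: A_def intro!: exI[of _ b])
    have bdd: "bdd_above A" unfolding bdd_above_def A_def
      proof (rule exI[of _ c], safe)
      fix x assume "F x \<le> u"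
      thus "x \<le> c" using c[of x] by (cases "x \<ge> c") auto
    qed
    have cl: "closed A" unfolding A_def
      by (rule closed_Collect_le) (use Fcont_on in auto)
    define q where "q = quantile F u"
    have qA: "q \<in> A" unfolding q_def quantile_def A_def[symmetric]
      by (rule closed_contains_Sup[OF ne bdd cl])
    have up: "x \<le> q" if "x \<in> A" for x
      unfolding q_def quantile_def A_def[symmetric] using that bdd by (rule cSup_upper)
    have "F q \<ge> u"
    proof (rule ccontr)
      assume "\<not> F q \<ge> u"
      hence lt: "0 < u - F q" by simp
      have c1: "(\<lambda>x. u - F x) \<midarrow>q\<rightarrow> u - F q" using Fcont[of q] unfolding isCont_def by (intro tendsto_intros)
      obtain d where d: "d > 0" "\<forall>y. y \<noteq> q \<and> \<bar>q - y\<bar> < d \<longrightarrow> 0 < u - F y"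
        using LIM_fun_gt_zero[OF c1 lt] by auto
      have "F (q + d/2) < u" using d(2)[rule_format, of "q + d/2"] d(1) by simp
      hence "q + d/2 \<in> A" by (simp add: A_def)
      from up[OF this] d show False by simp
    qed
    moreover have "F q \<le> u" using qA by (simp add: A_def)
    ultimately have Fq: "F q = u" by simp
    have "A = {..q}"
    proof
      show "A \<subseteq> {..q}" using up by auto
      show "{..q} \<subseteq> A" using Fmono Fq by (auto simp: A_def)
    qed
    thus ?thesis using Fq by (simp add: A_def q_def)
  qed
  have Fmeas[measurable]: "F \<in> borel_measurable borel"
    by (rule borel_measurable_mono) (auto simp: mono_def Fmono)
  define T where "T = distr D borel F"
  interpret RT: real_distribution T unfolding T_def by (rule RD.real_distribution_distr) simp
  define U where "U = uniform_measure lborel {0..(1::real)}"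
  interpret RU: prob_space U unfolding U_def by (rule prob_space_uniform_measure) auto
  interpret RU: real_distribution U by standard (simp add: U_def)
  have cdfT: "cdf T u = u" if "0 < u" "u < 1" for u
  proof -
    have "cdf T u = measure D (F -` {..u})"
      unfolding cdf_def T_def by (subst measure_distr) auto
    also have "F -` {..u} = {x. F x \<le> u}" by auto
    also have "\<dots> = {..quantile F u}" using Se[OF that] by simp
    also have "measure D \<dots> = u" using Se[OF that] FD by simp
    finally show ?thesis .
  qed
  have cdfT': "cdf T u = (if u < 0 then 0 else if u \<le> 1 then u else 1)" for u
  proof -
    have pre: "cdf T u = measure D {x. F x \<le> u}" for u
      unfolding cdf_def T_def by (subst measure_distr) (auto simp: vimage_def)
    consider "u < 0" | "u = 0" | "0 < u \<and> u < 1" | "u \<ge> 1" by linarith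
    thus ?thesis
    proof cases
      case 1
      hence "{x. F x \<le> u} = {}" using F0 by (auto simp: not_le intro: order.strict_trans2)
      thus ?thesis using 1 pre by simp
    next
      case 2
      have "(cdf T \<longlongrightarrow> cdf T 0) (at_right 0)"
        using RT.cdf_is_right_cont[of 0] by (simp add: continuous_within)
      moreover have "(cdf T \<longlongrightarrow> 0) (at_right 0)"
      proof -
        have "((\<lambda>x::real. x) \<longlongrightarrow> 0) (at_right 0)" by (rule tendsto_ident_at)
        moreover have "eventually (\<lambda>x. x = cdf T x) (at_right (0::real))"
          unfolding eventually_at_right_field
          by (rule exI[of _ 1]) (auto simp: cdfT)
        ultimately show ?thesis by (rule Lim_transform_eventually)
      qed
      ultimately have "cdf T 0 = 0" by (rule tendsto_unique[rotated]) simp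
      thus ?thesis using 2 by simp
    next
      case 3 thus ?thesis using cdfT by simp
    next
      case 4
      hence "{x. F x \<le> u} = UNIV" using F1 by (auto intro: order.trans)
      thus ?thesis using 4 pre RD.prob_space by simp
    qed
  qed
  have cdfU: "cdf U u = (if u < 0 then 0 else if u \<le> 1 then u else 1)" for u
  proof -
    have "cdf U u = measure lborel ({0..1} \<inter> {..u})"
      unfolding cdf_def U_def by (subst measure_uniform_measure) auto
    also have "\<dots> = (if u < 0 then 0 else if u \<le> 1 then u else 1)"
    proof -
      have "{0..1} \<inter> {..u} = (if u < 0 then {} else if u \<le> 1 then {0..u} else {0..1::real})"
        by auto
      thus ?thesis by simp
    qed
    finally show ?thesis .
  qed
  have TU: "T = U"
    by (rule cdf_unique) (unfold_locales, simp_all add: fun_eq_iff cdfT' cdfU)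
  define Q where "Q = quantile F"
  define B where "B = Beta (\<alpha> + 1) (\<beta> + 1)"
  have Bpos: "B > 0" using \<open>\<alpha> > -1\<close> \<open>\<beta> > -1\<close> by (simp add: B_def Beta_def Gamma_real_pos)
  define \<Phi> where "\<Phi> y = 1 / f (Q y)" for y
  have \<Phi>0: "\<Phi> y \<ge> 0" for y using f_nonneg[of "Q y"] by (simp add: \<Phi>_def)
  have Qmono: "mono_on {y. 0 < y \<and> y < 1} Q"
  proof (rule mono_onI)
    fix u v :: real assume uv: "u \<in> {y. 0 < y \<and> y < 1}" "v \<in> {y. 0 < y \<and> y < 1}" "u \<le> v"
    have "Q u \<in> {x. F x \<le> u}" using Se[of u] uv by (simp add: Q_def)
    hence "Q u \<in> {x. F x \<le> v}" using uv by auto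
    moreover have "{x. F x \<le> v} = {..Q v}" using Se[of v] uv by (simp add: Q_def)
    ultimately show "Q u \<le> Q v" by simp
  qed
  have \<Phi>_eq: "\<Phi> = (\<lambda>y. if 0 < y \<and> y < 1 then \<Phi> y else
                        (if y < 0 then \<Phi> (-1) else if y = 0 then \<Phi> 0 else \<Phi> 1))"
  proof
    fix y
    have "{x. F x \<le> y} = {}" if "y < 0" using that F0 by (auto simp: not_le intro: order.strict_trans2)
    moreover have "{x. F x \<le> y} = UNIV" if "y \<ge> 1" using that F1 by (auto intro: order.trans)
    moreover have "{x. F x \<le> -1} = {}" proof -
      have "F x > -1" for x using F0[of x] by linarith
      thus ?thesis by (auto simp: not_le)
    qed
    moreover have "{x. F x \<le> 1} = UNIV" using F1 by auto
    ultimately show "\<Phi> y = (if 0 < y \<and> y < 1 then \<Phi> y else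
                        (if y < 0 then \<Phi> (-1) else if y = 0 then \<Phi> 0 else \<Phi> 1))"
      by (auto simp: \<Phi>_def Q_def quantile_def)
  qed
  have \<Phi>meas[measurable]: "\<Phi> \<in> borel_measurable borel"
  proof -
    have fQ: "(\<lambda>y. f (Q y)) \<in> borel_measurable (restrict_space borel {y. 0 < y \<and> y < 1})"
      by (rule measurable_compose[OF borel_measurable_mono_on_fnc[OF Qmono] f_meas])
    have 1: "\<Phi> \<in> borel_measurable (restrict_space borel {y. 0 < y \<and> y < 1})"
      unfolding \<Phi>_def using fQ by measurable
    have 2: "(\<lambda>y::real. if y < 0 then \<Phi> (-1) else if y = 0 then \<Phi> 0 else \<Phi> 1) \<in> borel_measurable (restrict_space borel {y. \<not> (0 < y \<and> y < 1)})"
      by (rule measurable_restrict_space1) measurable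
    show ?thesis
      by (subst \<Phi>_eq, subst measurable_If_restrict_space_iff) (use 1 2 in auto)
  qed
  define k where "k u = (if 0 < u \<and> u < 1 then u powr \<alpha> * (1 - u) powr \<beta> * \<Phi> u else 0)" for u
  have k0: "k u \<ge> 0" for u using \<Phi>0[of u] by (simp add: k_def)
  have kmeas[measurable]: "k \<in> borel_measurable borel" unfolding k_def by measurable
  define g where "g x = F x powr \<alpha> * (1 - F x) powr \<beta>" for x
  define I where "I = (\<integral>\<^sup>+ x. ennreal (indicator S x * g x) \<partial>lborel)"
  have step1: "(\<integral>\<^sup>+ \<omega>. ennreal (\<Phi> (Y \<omega>)) \<partial>M) = (\<integral>\<^sup>+ y. ennreal (k y) \<partial>lborel) * ennreal (1 / B)"
  proof -
    have "(\<integral>\<^sup>+ \<omega>. ennreal (\<Phi> (Y \<omega>)) \<partial>M) =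
          (\<integral>\<^sup>+ y. ennreal (beta_density (\<alpha> + 1) (\<beta> + 1) y) * ennreal (\<Phi> y) \<partial>lborel)"
      by (rule distributed_nn_integral[OF Y_distr, symmetric]) measurable
    also have "\<dots> = (\<integral>\<^sup>+ y. ennreal (k y) * ennreal (1 / B) \<partial>lborel)"
    proof (rule nn_integral_cong)
      fix y :: real
      have "beta_density (\<alpha> + 1) (\<beta> + 1) y * \<Phi> y = k y * (1 / B)"
        by (simp add: beta_density_def k_def B_def)
      moreover have "beta_density (\<alpha> + 1) (\<beta> + 1) y \<ge> 0"
        using Bpos by (simp add: beta_density_def B_def)
      ultimately show "ennreal (beta_density (\<alpha> + 1) (\<beta> + 1) y) * ennreal (\<Phi> y) = ennreal (k y) * ennreal (1 / B)"
        using \<Phi>0[of y] k0[of y] Bpos by (simp add: ennreal_mult[symmetric])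
    qed
    also have "\<dots> = (\<integral>\<^sup>+ y. ennreal (k y) \<partial>lborel) * ennreal (1 / B)"
      by (rule nn_integral_multc) measurable
    finally show ?thesis .
  qed
  have step2: "(\<integral>\<^sup>+ y. ennreal (k y) \<partial>lborel) = I"
  proof -
    have "(\<integral>\<^sup>+ y. ennreal (k y) \<partial>lborel) = (\<integral>\<^sup>+ y. ennreal (k y) * indicator {0..1} y \<partial>lborel)"
      by (rule nn_integral_cong) (auto simp: k_def indicator_def)
    also have "\<dots> = (\<integral>\<^sup>+ y. ennreal (k y) \<partial>U)"
      unfolding U_def by (subst nn_integral_uniform_measure) (auto simp: divide_ennreal_def)
    also have "\<dots> = (\<integral>\<^sup>+ y. ennreal (k y) \<partial>T)" by (simp add: TU)
    also have "\<dots> = (\<integral>\<^sup>+ x. ennreal (k (F x)) \<partial>D)"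
      unfolding T_def by (subst nn_integral_distr) auto
    also have "\<dots> = (\<integral>\<^sup>+ x. ennreal (f x) * ennreal (k (F x)) \<partial>lborel)"
      unfolding DD by (subst nn_integral_density) (use f_meas in auto)
    also have "\<dots> = I"
      unfolding I_def
    proof (rule nn_integral_cong)
      fix x :: real
      have "f x * k (F x) = indicator S x * g x"
      proof (cases "x \<in> S")
        case True
        thus ?thesis using Sa[OF True] Sd[OF True] f_pos[of x]
          by (simp add: k_def g_def \<Phi>_def Q_def S_def)
      next
        case False
        hence "\<not> (0 < F x \<and> F x < 1)" using Sb by blast
        thus ?thesis using False by (auto simp: k_def)
      qed
      thus "ennreal (f x) * ennreal (k (F x)) = ennreal (indicator S x * g x)"
        using f_nonneg[of x] k0 by (simp add: ennreal_mult[symmetric])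
    qed
    finally show ?thesis .
  qed
  have G: "cigf F \<alpha> \<beta> = enn2real I"
  proof -
    have int: "integrable lborel (\<lambda>x. indicator S x *\<^sub>R g x)"
      using dom by (simp add: cigf_domain_def set_integrable_def S_def g_def)
    have "cigf F \<alpha> \<beta> = integral\<^sup>L lborel (\<lambda>x. indicator S x * g x)"
      by (simp add: cigf_def set_lebesgue_integral_def S_def g_def)
    also have "\<dots> = enn2real I"
      unfolding I_def using int by (subst integral_eq_nn_integral) (auto simp: g_def)
    finally show ?thesis .
  qed
  have E: "P.expectation (\<lambda>\<omega>. 1 / f (quantile F (Y \<omega>))) = enn2real (I * ennreal (1 / B))"
  proof -
    have "P.expectation (\<lambda>\<omega>. 1 / f (quantile F (Y \<omega>))) = P.expectation (\<lambda>\<omega>. \<Phi> (Y \<omega>))"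
      by (simp add: \<Phi>_def Q_def)
    also have "\<dots> = enn2real (\<integral>\<^sup>+ \<omega>. ennreal (\<Phi> (Y \<omega>)) \<partial>M)"
      by (rule integral_eq_nn_integral) (auto simp: \<Phi>0)
    finally show ?thesis using step1 step2 by simp
  qed
  show ?thesis
    using Bpos unfolding G E B_def[symmetric] by (simp add: enn2real_mult)
qed

end
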